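(* Let $X,Y,Z$ be compact Hausdorff spaces, and let $E\subseteq C(X)$ and $F\subseteq C(Y)$ be Riesz subspaces, dense for the supremum norm, which contain the constant functions. Let $\phi:E\times F\to C(Z)$ be a Riesz bimorphism which is bi-injective and satisfies $\phi(\mathbf{1}_X,\mathbf{1}_Y)=\mathbf{1}_Z$. Let $T:C(X\times Y)\to C(Z)$ be a lattice homomorphism with $T(\chi(f,g))=\phi(f,g)$ for all $f\in E$, $g\in F$ (such a $T$ exists and is uniquely determined by $\phi$). Then $T$ is injective.
   Context: For Riesz spaces $E,F,G$, a linear map $T:E\to G$ is a Riesz (lattice) homomorphism if $T(x\vee y)=Tx\vee Ty$ for all $x,y$. A bilinear map $\phi:E\times F\to G$ is a Riesz bimorphism if $\phi(\cdot,y):E\to G$ is a Riesz homomorphism for every $y\in F_+$ and $\phi(x,\cdot):F\to G$ is a Riesz homomorphism for every $x\in E_+$. $\phi$ is bi-injective if $\phi(x,y)=0$ implies $x=0$ or $y=0$. The natural bilinear embedding $\chi:C(X)\times C(Y)\to C(X\times Y)$ is $\chi(f,g)(x,y)=f(x)g(y)$. $\mathbf{1}_X$ denotes the constant function one on $X$. *)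

theory Defs
  imports "HOL-Analysis.Analysis"
begin

definition Cfun :: "('a::topological_space \<Rightarrow> real) set" where
  "Cfun = {f. continuous_on UNIV f}"

definition riesz_subspace :: "('a::topological_space \<Rightarrow> real) set \<Rightarrow> bool" where
  "riesz_subspace E \<longleftrightarrow> E \<subseteq> Cfun \<and> (\<lambda>_. 0) \<in> E \<and>
     (\<forall>f\<in>E. \<forall>g\<in>E. (\<lambda>x. f x + g x) \<in> E) \<and> (\<forall>c::real. \<forall>f\<in>E. (\<lambda>x. c * f x) \<in> E) \<and>
     (\<forall>f\<in>E. \<forall>g\<in>E. sup f g \<in> E)"

definition sup_dense :: "('a::topological_space \<Rightarrow> real) set \<Rightarrow> bool" where
  "sup_dense E \<longleftrightarrow> (\<forall>f\<in>Cfun. \<forall>e>0. \<exists>g\<in>E. \<forall>x. \<bar>f x - g x\<bar> < e)"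

definition riesz_hom_on :: "('a \<Rightarrow> real) set \<Rightarrow> (('a \<Rightarrow> real) \<Rightarrow> ('b \<Rightarrow> real)) \<Rightarrow> bool" where
  "riesz_hom_on A T \<longleftrightarrow>
     (\<forall>f\<in>A. \<forall>g\<in>A. \<forall>a b::real. T (\<lambda>x. a * f x + b * g x) = (\<lambda>z. a * T f z + b * T g z)) \<and>
     (\<forall>f\<in>A. \<forall>g\<in>A. T (sup f g) = sup (T f) (T g))"

definition riesz_bimorphism ::
  "('a::topological_space \<Rightarrow> real) set \<Rightarrow> ('b::topological_space \<Rightarrow> real) set \<Rightarrow>
   (('a \<Rightarrow> real) \<Rightarrow> ('b \<Rightarrow> real) \<Rightarrow> ('c::topological_space \<Rightarrow> real)) \<Rightarrow> bool" where
  "riesz_bimorphism E F \<phi> \<longleftrightarrow>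
     (\<forall>f\<in>E. \<forall>g\<in>F. \<phi> f g \<in> Cfun) \<and>
     (\<forall>g\<in>F. riesz_hom_on E (\<lambda>f. \<phi> f g) \<or> \<not> (\<forall>y. 0 \<le> g y)) \<and>
     (\<forall>f\<in>E. riesz_hom_on F (\<lambda>g. \<phi> f g) \<or> \<not> (\<forall>x. 0 \<le> f x)) \<and>
     (\<forall>g\<in>F. \<forall>f\<in>E. \<forall>f'\<in>E. \<forall>a b::real.
        \<phi> (\<lambda>x. a * f x + b * f' x) g = (\<lambda>z. a * \<phi> f g z + b * \<phi> f' g z)) \<and>
     (\<forall>f\<in>E. \<forall>g\<in>F. \<forall>g'\<in>F. \<forall>a b::real.
        \<phi> f (\<lambda>y. a * g y + b * g' y) = (\<lambda>z. a * \<phi> f g z + b * \<phi> f g' z))"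

definition bi_injective ::
  "('a \<Rightarrow> real) set \<Rightarrow> ('b \<Rightarrow> real) set \<Rightarrow> (('a \<Rightarrow> real) \<Rightarrow> ('b \<Rightarrow> real) \<Rightarrow> ('c \<Rightarrow> real)) \<Rightarrow> bool" where
  "bi_injective E F \<phi> \<longleftrightarrow> (\<forall>f\<in>E. \<forall>g\<in>F. \<phi> f g = (\<lambda>_. 0) \<longrightarrow> f = (\<lambda>_. 0) \<or> g = (\<lambda>_. 0))"

definition chi :: "('a \<Rightarrow> real) \<Rightarrow> ('b \<Rightarrow> real) \<Rightarrow> ('a \<times> 'b \<Rightarrow> real)" where
  "chi f g = (\<lambda>(x, y). f x * g y)"

end

theory Submission
  imports Defs
begin

lemma bump:
  fixes x0 :: "'a::t2_space"
  assumes "compact (UNIV::'a set)" "open U" "x0 \<in> U"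
  obtains f :: "'a \<Rightarrow> real" where "continuous_on UNIV f" "\<And>x. 0 \<le> f x" "\<And>x. f x \<le> 1"
    "f x0 = 1" "\<And>x. x \<notin> U \<Longrightarrow> f x = 0"
proof -
  have "normal_space (euclidean :: 'a topology)"
    apply (rule compact_Hausdorff_or_regular_imp_normal_space)
    using assms(1) hausdorff by (auto simp: compact_space_def Hausdorff_space_def disjnt_def)
  then obtain f where f: "continuous_map euclidean (top_of_set {0..1::real}) f" "f ` (- U) \<subseteq> {0}" "f ` {x0} \<subseteq> {1}"
  proof (rule Urysohn_lemma[where S="-U" and T="{x0}" and a=0 and b=1])
    show "closedin euclidean (- U)" using assms by (simp add: closed_Compl)
  qed (use assms \<open>normal_space euclidean\<close> in \<open>auto simp: disjnt_def\<close>)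
  show ?thesis
    apply (rule that[of f])
    using f by (auto simp: continuous_map_in_subtopology)
qed

lemma bump_ex:
  fixes x0 :: "'a::t2_space"
  assumes "compact (UNIV::'a set)" "open U" "x0 \<in> U"
  shows "\<exists>f :: 'a \<Rightarrow> real. continuous_on UNIV f \<and> (\<forall>x. 0 \<le> f x) \<and> (\<forall>x. f x \<le> 1) \<and>
    f x0 = 1 \<and> (\<forall>x. x \<notin> U \<longrightarrow> f x = 0)"
proof -
  obtain f :: "'a \<Rightarrow> real" where "continuous_on UNIV f" "\<And>x. 0 \<le> f x" "\<And>x. f x \<le> 1"
    "f x0 = 1" "\<And>x. x \<notin> U \<Longrightarrow> f x = 0" using bump[OF assms] by blast
  then show ?thesis by blast
qed

theorem proposition3p3:
  fixes E :: "('x::t2_space \<Rightarrow> real) set"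
    and F :: "('y::t2_space \<Rightarrow> real) set"
    and \<phi> :: "('x \<Rightarrow> real) \<Rightarrow> ('y \<Rightarrow> real) \<Rightarrow> ('z::t2_space \<Rightarrow> real)"
    and T :: "('x \<times> 'y \<Rightarrow> real) \<Rightarrow> ('z \<Rightarrow> real)"
  assumes cX: "compact (UNIV :: 'x set)"
    and cY: "compact (UNIV :: 'y set)"
    and cZ: "compact (UNIV :: 'z set)"
    and E: "riesz_subspace E" "sup_dense E" "\<And>c. (\<lambda>_. c) \<in> E"
    and F: "riesz_subspace F" "sup_dense F" "\<And>c. (\<lambda>_. c) \<in> F"
    and phi: "riesz_bimorphism E F \<phi>" "bi_injective E F \<phi>"
    and phi1: "\<phi> (\<lambda>_. 1) (\<lambda>_. 1) = (\<lambda>_. 1)"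
    and T: "\<forall>h\<in>Cfun. T h \<in> Cfun" "riesz_hom_on Cfun T"
    and Tchi: "\<forall>f\<in>E. \<forall>g\<in>F. T (chi f g) = \<phi> f g"
  shows "inj_on T Cfun"
proof -
  have C0: "(\<lambda>_. 0) \<in> Cfun" by (simp add: Cfun_def)
  have lin: "\<And>f g a b. f \<in> Cfun \<Longrightarrow> g \<in> Cfun \<Longrightarrow> T (\<lambda>x. a * f x + b * g x) = (\<lambda>z. a * T f z + b * T g z)"
    using T(2) unfolding riesz_hom_on_def by blast
  have Tsup: "\<And>f g. f \<in> Cfun \<Longrightarrow> g \<in> Cfun \<Longrightarrow> T (sup f g) = sup (T f) (T g)"
    using T(2) unfolding riesz_hom_on_def by blast
  have T0: "T (\<lambda>_. 0) = (\<lambda>_. 0)"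
    using lin[OF C0 C0, of 0 0] by simp
  have Tpos: "\<And>h z. h \<in> Cfun \<Longrightarrow> (\<And>p. 0 \<le> h p) \<Longrightarrow> 0 \<le> T h z"
  proof -
    fix h :: "'x \<times> 'y \<Rightarrow> real" and z assume h: "h \<in> Cfun" "\<And>p. 0 \<le> (h p::real)"
    have "sup h (\<lambda>_. 0) = h" using h(2) by (auto simp: sup_fun_def fun_eq_iff sup_real_def)
    then have "T h = sup (T h) (\<lambda>_. 0)" using Tsup[OF h(1) C0] T0 by simp
    then show "0 \<le> T h z" by (metis sup.cobounded2 le_funD)
  qed
  have Cdiff: "\<And>f g. f \<in> Cfun \<Longrightarrow> g \<in> Cfun \<Longrightarrow> (\<lambda>x. a * f x + b * g x) \<in> Cfun" for a b
    by (auto simp: Cfun_def intro!: continuous_intros)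
  have Tmono: "\<And>f g z. f \<in> Cfun \<Longrightarrow> g \<in> Cfun \<Longrightarrow> (\<And>p. f p \<le> g p) \<Longrightarrow> T f z \<le> T g z"
  proof -
    fix f g :: "'x \<times> 'y \<Rightarrow> real" and z assume fg: "f \<in> Cfun" "g \<in> Cfun" "\<And>p. f p \<le> (g p::real)"
    have "0 \<le> T (\<lambda>x. 1 * g x + (-1) * f x) z"
      by (rule Tpos) (use fg Cdiff[OF fg(2) fg(1), of 1 "-1"] in auto)
    then show "T f z \<le> T g z" using lin[OF fg(2) fg(1), of 1 "-1"] by simp
  qed
  show ?thesis
  proof (rule inj_onI)
    fix h1 h2 assume h1: "h1 \<in> Cfun" and h2: "h2 \<in> Cfun" and eq: "T h1 = T h2"
    define h where "h = (\<lambda>x. 1 * h1 x + (-1) * h2 x)"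
    have hC: "h \<in> Cfun" unfolding h_def using Cdiff h1 h2 by blast
    have Th: "T h = (\<lambda>_. 0)" unfolding h_def lin[OF h1 h2] eq by simp
    show "h1 = h2"
    proof (rule ccontr)
      assume "h1 \<noteq> h2"
      then obtain p0 where "h p0 \<noteq> 0" unfolding h_def by (auto simp: fun_eq_iff)
      define \<epsilon> where "\<epsilon> = \<bar>h p0\<bar> / 2"
      have epos: "\<epsilon> > 0" using \<open>h p0 \<noteq> 0\<close> by (simp add: \<epsilon>_def)
      define W where "W = {p. \<epsilon> < \<bar>h p\<bar>}"
      have "open W" unfolding W_def
        using hC by (auto simp: Cfun_def intro!: open_Collect_less continuous_intros)
      moreover have "p0 \<in> W" using epos by (simp add: W_def \<epsilon>_def)
      ultimately obtain U V where UV: "open U" "open V" "p0 \<in> U \<times> V" "U \<times> V \<subseteq> W"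
        by (metis open_prod_elim)
      obtain x0 y0 where p0: "p0 = (x0, y0)" by force
      have x0U: "x0 \<in> U" and y0V: "y0 \<in> V" using UV(3) p0 by auto
      obtain f0 :: "'x \<Rightarrow> real" where f0: "continuous_on UNIV f0" "\<And>x. 0 \<le> f0 x" "\<And>x. f0 x \<le> 1"
        "f0 x0 = 1" "\<And>x. x \<notin> U \<Longrightarrow> f0 x = 0"
        using bump_ex[OF cX UV(1) x0U] by auto
      obtain g0 :: "'y \<Rightarrow> real" where g0: "continuous_on UNIV g0" "\<And>x. 0 \<le> g0 x" "\<And>x. g0 x \<le> 1"
        "g0 y0 = 1" "\<And>x. x \<notin> V \<Longrightarrow> g0 x = 0"
        using bump_ex[OF cY UV(2) y0V] by auto
      have third: "(1/3::real) > 0" by simp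
      have f0C: "f0 \<in> Cfun" using f0(1) by (simp add: Cfun_def)
      have g0C: "g0 \<in> Cfun" using g0(1) by (simp add: Cfun_def)
      obtain f where f: "f \<in> E" "\<And>x. \<bar>f0 x - f x\<bar> < 1/3"
        using E(2)[unfolded sup_dense_def, rule_format, OF f0C third] by blast
      obtain g where g: "g \<in> F" "\<And>x. \<bar>g0 x - g x\<bar> < 1/3"
        using F(2)[unfolded sup_dense_def, rule_format, OF g0C third] by blast
      define f' where "f' = sup (\<lambda>x. f x + (\<lambda>_. -1/3) x) (\<lambda>_. 0::real)"
      define g' where "g' = sup (\<lambda>x. g x + (\<lambda>_. -1/3) x) (\<lambda>_. 0::real)"
      have Eadd: "\<And>f g. f \<in> E \<Longrightarrow> g \<in> E \<Longrightarrow> (\<lambda>x. f x + g x) \<in> E"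
        and Esup: "\<And>f g. f \<in> E \<Longrightarrow> g \<in> E \<Longrightarrow> sup f g \<in> E"
        using E(1) unfolding riesz_subspace_def by auto
      have Fadd: "\<And>f g. f \<in> F \<Longrightarrow> g \<in> F \<Longrightarrow> (\<lambda>x. f x + g x) \<in> F"
        and Fsup: "\<And>f g. f \<in> F \<Longrightarrow> g \<in> F \<Longrightarrow> sup f g \<in> F"
        using F(1) unfolding riesz_subspace_def by auto
      have f'E: "f' \<in> E" unfolding f'_def by (intro Esup Eadd f(1) E(3))
      have g'F: "g' \<in> F" unfolding g'_def by (intro Fsup Fadd g(1) F(3))
      have f'v: "f' x = max (f x - 1/3) 0" for x by (simp add: f'_def sup_fun_def sup_real_def)
      have g'v: "g' x = max (g x - 1/3) 0" for x by (simp add: g'_def sup_fun_def sup_real_def)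
      have f'b: "0 \<le> f' x" "f' x \<le> 1" for x using f(2)[of x] f0(3)[of x] unfolding f'v by (smt (verit))+
      have g'b: "0 \<le> g' x" "g' x \<le> 1" for x using g(2)[of x] g0(3)[of x] unfolding g'v by (smt (verit))+
      have f'U: "f' x = 0" if "x \<notin> U" for x using f(2)[of x] f0(5)[OF that] unfolding f'v by (smt (verit))
      have g'V: "g' x = 0" if "x \<notin> V" for x using g(2)[of x] g0(5)[OF that] unfolding g'v by (smt (verit))
      have f'0: "f' x0 > 0" using f(2)[of x0] f0(4) unfolding f'v less_max_iff_disj abs_less_iff by auto
      have g'0: "g' y0 > 0" using g(2)[of y0] g0(4) unfolding g'v less_max_iff_disj abs_less_iff by auto
      have f'C: "continuous_on UNIV f'" using E(1) f'E unfolding riesz_subspace_def Cfun_def by blast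
      have g'C: "continuous_on UNIV g'" using F(1) g'F unfolding riesz_subspace_def Cfun_def by blast
      define k where "k = chi f' g'"
      have kC: "k \<in> Cfun" unfolding k_def chi_def Cfun_def case_prod_unfold
        by (auto intro!: continuous_intros continuous_on_compose2[OF f'C] continuous_on_compose2[OF g'C])
      define a where "a = (\<lambda>p. (1/\<epsilon>) * sup h (\<lambda>x. (-1) * h x + 0 * h x) p + 0 * h p)"
      have mC: "(\<lambda>x. (-1) * h x + 0 * h x) \<in> Cfun" using Cdiff hC by blast
      have supC: "sup h (\<lambda>x. (-1) * h x + 0 * h x) \<in> Cfun"
        using hC unfolding Cfun_def sup_fun_def sup_real_def by (auto intro!: continuous_intros)
      have aC: "a \<in> Cfun" unfolding a_def using Cdiff[OF supC hC] .
      have Ta: "T a = (\<lambda>_. 0)"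
        unfolding a_def lin[OF supC hC] Tsup[OF hC mC] lin[OF hC hC] Th by (simp add: sup_fun_def sup_real_def)
      have aval: "a p = (1/\<epsilon>) * \<bar>h p\<bar>" for p
        by (auto simp: a_def sup_fun_def sup_real_def max_def abs_if)
      have ka: "k p \<le> a p" for p
      proof (cases "p \<in> U \<times> V")
        case True
        then have "\<epsilon> < \<bar>h p\<bar>" using UV(4) W_def by auto
        then have "1 \<le> (1/\<epsilon>) * \<bar>h p\<bar>" using epos by (simp add: field_simps)
        moreover have "k p \<le> 1" unfolding k_def chi_def case_prod_unfold
          using f'b g'b by (simp add: mult_le_one)
        ultimately show ?thesis unfolding aval by linarith
      next
        case False
        then have "k p = 0" unfolding k_def chi_def case_prod_unfold using f'U g'V
          by (cases p) auto
        moreover have "0 \<le> a p" unfolding aval using epos by simp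
        ultimately show ?thesis by simp
      qed
      have "T k = (\<lambda>_. 0)"
      proof
        fix z
        have "T k z \<le> T a z" by (rule Tmono[OF kC aC ka])
        moreover have "0 \<le> T k z" by (rule Tpos[OF kC]) (simp add: k_def chi_def case_prod_unfold f'b g'b)
        ultimately show "T k z = 0" using Ta by simp
      qed
      then have "\<phi> f' g' = (\<lambda>_. 0)" using Tchi f'E g'F k_def by simp
      then have "f' = (\<lambda>_. 0) \<or> g' = (\<lambda>_. 0)" using phi(2) f'E g'F unfolding bi_injective_def by blast
      then show False using f'0 g'0 by (auto simp: fun_eq_iff)
    qed
  qed
qed

end
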